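(* Let $M,N\in\mathbb{R}^{(k+n)\times(k+n)}$ be symmetric. Let $\mathcal{S}_N:=\{Z\in\mathbb{R}^{n\times k}\mid \begin{bmatrix} I\\ Z\end{bmatrix}^\top N\begin{bmatrix} I\\ Z\end{bmatrix}\ge 0\}$. Assume $\mathcal{S}_N$ is bounded and that there exists $\bar Z\in\mathbb{R}^{n\times k}$ with $\begin{bmatrix} I\\ \bar Z\end{bmatrix}^\top N\begin{bmatrix} I\\ \bar Z\end{bmatrix}>0$. Then $$\begin{bmatrix} I\\ Z\end{bmatrix}^\top M\begin{bmatrix} I\\ Z\end{bmatrix}>0 \quad\text{for all } Z\in\mathcal{S}_N$$ if and only if there exists $\alpha\ge0$ such that $M-\alpha N>0$.
   Context: $I$ denotes the $k\times k$ identity. For symmetric matrices, $\ge 0$ means positive semidefinite and $>0$ positive definite. *)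

theory Defs
  imports "HOL-Analysis.Analysis"
begin

definition stackIZ :: "real^'k^'n \<Rightarrow> real^'k^('k + 'n)" where
  "stackIZ Z = (\<chi> i. case i of Inl a \<Rightarrow> (mat 1 :: real^'k^'k) $ a | Inr b \<Rightarrow> Z $ b)"

definition psd :: "real^'m^'m \<Rightarrow> bool" where
  "psd A \<longleftrightarrow> transpose A = A \<and> (\<forall>x. 0 \<le> x \<bullet> (A *v x))"

definition pd :: "real^'m^'m \<Rightarrow> bool" where
  "pd A \<longleftrightarrow> transpose A = A \<and> (\<forall>x. x \<noteq> 0 \<longrightarrow> 0 < x \<bullet> (A *v x))"

definition quadIZ :: "real^('k + 'n)^('k + 'n) \<Rightarrow> real^'k^'n \<Rightarrow> real^'k^'k" where
  "quadIZ N Z = transpose (stackIZ Z) ** N ** stackIZ Z"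

definition SN :: "real^('k + 'n)^('k + 'n) \<Rightarrow> (real^'k^'n) set" where
  "SN N = {Z. psd (quadIZ N Z)}"

end

theory Submission
  imports Defs
begin


definition qf :: "real^'m^'m \<Rightarrow> real^'m \<Rightarrow> real" where
  "qf A x = x \<bullet> (A *v x)"

definition emb1 :: "real^'k \<Rightarrow> real^('k::finite + 'n::finite)" where
  "emb1 u = (\<chi> i. case i of Inl a \<Rightarrow> u $ a | Inr b \<Rightarrow> 0)"
definition emb2 :: "real^'n \<Rightarrow> real^('k::finite + 'n::finite)" where
  "emb2 u = (\<chi> i. case i of Inl a \<Rightarrow> 0 | Inr b \<Rightarrow> u $ b)"
definition pk :: "real^('k::finite + 'n::finite) \<Rightarrow> real^'k" where
  "pk x = (\<chi> a. x $ Inl a)"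
definition pn :: "real^('k::finite + 'n::finite) \<Rightarrow> real^'n" where
  "pn x = (\<chi> b. x $ Inr b)"

lemma sum_UNIV_plus:
  "sum g (UNIV::('a::finite+'b::finite) set) = sum (\<lambda>a. g (Inl a)) UNIV + sum (\<lambda>b. g (Inr b)) UNIV"
  using sum.Plus[of "UNIV::'a set" "UNIV::'b set" g] by (simp add: comp_def)

lemma decomp: "x = emb1 (pk x) + emb2 (pn x)"
  by (simp add: vec_eq_iff emb1_def emb2_def pk_def pn_def split: sum.split)

lemma pk_emb: "pk (emb1 u + emb2 v) = u" "pn (emb1 u + emb2 v) = v"
  "pk (emb2 v) = 0" "pn (emb2 v) = v"
  by (simp_all add: vec_eq_iff emb1_def emb2_def pk_def pn_def)

lemma emb2_inner: "emb2 d \<bullet> y = d \<bullet> pn y"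
  by (simp add: inner_vec_def sum_UNIV_plus emb2_def pn_def)

lemma emb2_lin: "emb2 (x + y) = emb2 x + emb2 y" "emb2 (c *\<^sub>R x) = c *\<^sub>R emb2 x"
  "emb2 (x - y) = emb2 x - emb2 y" "emb2 0 = 0"
  by (simp_all add: vec_eq_iff emb2_def split: sum.split)
lemma emb1_lin: "emb1 (x + y) = emb1 x + emb1 y" "emb1 (c *\<^sub>R x) = c *\<^sub>R emb1 x"
  by (simp_all add: vec_eq_iff emb1_def split: sum.split)
lemma pn_lin: "pn (x + y) = pn x + pn y" "pn (c *\<^sub>R x) = c *\<^sub>R pn x" "pn (-x) = - pn x"
  by (simp_all add: vec_eq_iff pn_def)

lemma linear_emb1: "linear emb1" by (rule linearI) (simp_all add: emb1_lin)
lemma linear_emb2: "linear emb2" by (rule linearI) (simp_all add: emb2_lin)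
lemma linear_pn: "linear pn" by (rule linearI) (simp_all add: pn_lin)

lemma stack_comp: "(stackIZ Z *v u) $ i = (case i of Inl a \<Rightarrow> (mat 1 *v u) $ a | Inr b \<Rightarrow> (Z *v u) $ b)"
  by (simp add: stackIZ_def matrix_vector_mult_def split: sum.split)

lemma stack_mult: "stackIZ Z *v u = emb1 u + emb2 (Z *v u)"
  by (simp add: vec_eq_iff stack_comp emb1_def emb2_def split: sum.split)

lemma pk_stack: "pk (stackIZ Z *v u) = u"
  by (simp add: stack_mult pk_emb)

lemma sym_bil: "transpose A = A \<Longrightarrow> x \<bullet> ((A::real^'m^'m) *v y) = y \<bullet> (A *v x)"
  by (metis dot_lmul_matrix inner_commute transpose_matrix_vector)

lemma qf_quad: "qf (quadIZ N Z) u = qf N (stackIZ Z *v u)"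
proof -
  let ?S = "stackIZ Z"
  have "qf (quadIZ N Z) u = u \<bullet> (transpose ?S *v (N *v (?S *v u)))"
    unfolding qf_def quadIZ_def by (simp only: matrix_vector_mul_assoc matrix_mul_assoc)
  also have "\<dots> = (u v* transpose ?S) \<bullet> (N *v (?S *v u))"
    by (simp only: dot_lmul_matrix)
  also have "\<dots> = qf N (?S *v u)" by (simp only: vector_transpose_matrix qf_def)
  finally show ?thesis .
qed

lemma quad_sym: "transpose N = N \<Longrightarrow> transpose (quadIZ N Z) = quadIZ N Z"
  unfolding quadIZ_def by (simp add: matrix_transpose_mul matrix_mul_assoc)

lemma qf_add: "transpose A = A \<Longrightarrow> qf A (x + y) = qf A x + 2 * (x \<bullet> (A *v y)) + qf A y"
  unfolding qf_def
  by (simp add: matrix_vector_right_distrib inner_add_left inner_add_right sym_bil[of A y x])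

lemma qf_scale: "qf A (c *\<^sub>R x) = c^2 * qf A x"
  by (simp add: qf_def matrix_vector_mult_scaleR power2_eq_square)

lemma bil_scale: "(a *\<^sub>R x) \<bullet> ((A::real^'n^'m) *v (b *\<^sub>R y)) = a * b * (x \<bullet> (A *v y))"
  by (simp add: matrix_vector_mult_scaleR)

lemma qf_diff: "qf (M - c *\<^sub>R N) x = qf M x - c * qf N x"
  by (simp add: qf_def matrix_vector_mult_diff_rdistrib scaleR_matrix_vector_assoc[symmetric] inner_diff_right)

lemma qf_id: "qf (M + c *\<^sub>R mat 1) x = qf M x + c * (x \<bullet> x)"
  by (simp add: qf_def matrix_vector_mult_add_rdistrib scaleR_matrix_vector_assoc[symmetric] inner_add_right)

lemma cont_qf: "continuous_on S (qf A)"
proof -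
  have "bounded_linear (\<lambda>x. A *v x)" by (simp add: linear_conv_bounded_linear)
  then have "continuous_on S (\<lambda>x. A *v x)" by (rule linear_continuous_on)
  then show ?thesis unfolding qf_def by (intro continuous_intros)
qed

lemma transpose_lin: "transpose (M + c *\<^sub>R B) = transpose M + c *\<^sub>R transpose B"
  "transpose (M - c *\<^sub>R B) = transpose M - c *\<^sub>R transpose B"
  by (simp_all add: vec_eq_iff transpose_def)

lemma two_root:
  fixes n1 n12 n2 m1 m12 m2 :: real
  assumes n1: "n1 > 0" and n2: "n2 < 0"
    and h: "\<And>a. a^2*n1 + 2*a*n12 + n2 = 0 \<Longrightarrow> 0 \<le> a^2*m1 + 2*a*m12 + m2"
  shows "n2*m1 \<le> m2*n1"
proof -
  define D where "D = n12^2 - n1*n2"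
  have "n1*n2 < 0" using n1 n2 by (simp add: mult_pos_neg)
  then have Dp: "D > 0" unfolding D_def by (smt (verit) zero_le_power2)
  define s where "s = sqrt D"
  have sp: "s > 0" using Dp by (simp add: s_def)
  have s2: "s^2 = D" using Dp by (simp add: s_def)
  define p where "p = (-n12 + s)/n1"
  define r where "r = (-n12 - s)/n1"
  have pn: "p*n1 = -n12 + s" using n1 by (simp add: p_def)
  have rn: "r*n1 = -n12 - s" using n1 by (simp add: r_def)
  have "n1 * (p^2*n1 + 2*p*n12 + n2) = (p*n1)^2 + 2*(p*n1)*n12 + n1*n2"
    by (simp add: algebra_simps power2_eq_square)
  also have "\<dots> = s^2 - D" unfolding pn D_def by (simp add: algebra_simps power2_eq_square)
  finally have rp: "p^2*n1 + 2*p*n12 + n2 = 0" using s2 n1 by simp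
  have "n1 * (r^2*n1 + 2*r*n12 + n2) = (r*n1)^2 + 2*(r*n1)*n12 + n1*n2"
    by (simp add: algebra_simps power2_eq_square)
  also have "\<dots> = s^2 - D" unfolding rn D_def by (simp add: algebra_simps power2_eq_square)
  finally have rr: "r^2*n1 + 2*r*n12 + n2 = 0" using s2 n1 by simp
  have "(p*n1)*(r*n1) = n12^2 - s^2" unfolding pn rn by (simp add: algebra_simps power2_eq_square)
  then have "(p*r)*(n1*n1) = n1*n2" using s2 unfolding D_def by (simp add: algebra_simps)
  then have prr: "p*r = n2/n1" using n1 by (simp add: field_simps)
  have "(p - r) * n1 = 2 * s" using pn rn by (simp add: algebra_simps)
  then have pr: "p - r > 0" using sp n1 by (smt (verit) mult_nonpos_nonneg)
  have "p*r < 0" using prr n1 n2 by (simp add: divide_neg_pos)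
  then have pp: "p > 0" and rneg: "r < 0" using pr by (auto simp: mult_less_0_iff)
  have hp: "0 \<le> p^2*m1 + 2*p*m12 + m2" using h rp .
  have hr: "0 \<le> r^2*m1 + 2*r*m12 + m2" using h rr .
  have a1: "0 \<le> (-r)*(p^2*m1 + 2*p*m12 + m2)"
    using hp rneg mult_nonpos_nonneg[of r "p^2*m1 + 2*p*m12 + m2"] by simp
  have a2: "0 \<le> p*(r^2*m1 + 2*r*m12 + m2)" using hr pp by simp
  have "0 \<le> (-r)*(p^2*m1 + 2*p*m12 + m2) + p*(r^2*m1 + 2*r*m12 + m2)"
    using a1 a2 by linarith
  also have "\<dots> = (p - r)*(m2 - m1*(p*r))" by (simp add: algebra_simps power2_eq_square)
  finally have "0 \<le> m2 - m1*(p*r)" using pr by (simp add: zero_le_mult_iff)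
  then have "m1*(n2/n1) \<le> m2" using prr by simp
  then show ?thesis using n1 by (simp add: field_simps)
qed

lemma pairwise:
  fixes M N :: "real^'m^'m"
  assumes sM: "transpose M = M" and sN: "transpose N = N"
    and hyp: "\<And>z. 0 \<le> qf N z \<Longrightarrow> 0 \<le> qf M z"
    and x: "qf N x > 0" and y: "qf N y < 0"
  shows "qf N y * qf M x \<le> qf M y * qf N x"
proof -
  have e: "qf A (a *\<^sub>R x + y) = a^2 * qf A x + 2*a*(x \<bullet> (A *v y)) + qf A y"
    if "transpose A = A" for A :: "real^'m^'m" and a
    using that by (simp add: qf_add qf_scale)
  show ?thesis
  proof (rule two_root[of "qf N x" "qf N y" "x \<bullet> (N *v y)" "qf M x" "x \<bullet> (M *v y)" "qf M y"])
    fix a assume "a^2 * qf N x + 2 * a * (x \<bullet> (N *v y)) + qf N y = 0"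
    then have "0 \<le> qf N (a *\<^sub>R x + y)" using e[OF sN] by simp
    then have "0 \<le> qf M (a *\<^sub>R x + y)" by (rule hyp)
    then show "0 \<le> a^2 * qf M x + 2 * a * (x \<bullet> (M *v y)) + qf M y" using e[OF sM] by simp
  qed (use x y in auto)
qed

lemma s_nonstrict:
  fixes M N :: "real^'m^'m"
  assumes sM: "transpose M = M" and sN: "transpose N = N"
    and x0: "qf N x0 > 0"
    and hyp: "\<And>z. 0 \<le> qf N z \<Longrightarrow> 0 \<le> qf M z"
  shows "\<exists>\<alpha>\<ge>0. \<forall>x. 0 \<le> qf M x - \<alpha> * qf N x"
proof -
  define S where "S = {qf M y / qf N y | y. qf N y < 0}"
  define \<alpha> where "\<alpha> = (if S = {} then 0 else max 0 (Sup S))"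
  have ub: "t \<le> qf M x / qf N x" if xp: "qf N x > 0" and t: "t \<in> S" for x t
  proof -
    obtain y where ty: "t = qf M y / qf N y" and yn: "qf N y < 0" using t by (auto simp: S_def)
    have "qf N y * qf M x \<le> qf M y * qf N x" by (rule pairwise[OF sM sN hyp xp yn])
    then show ?thesis unfolding ty using xp yn by (simp add: field_simps)
  qed
  have bdd: "bdd_above S" using ub[OF x0] by (rule bdd_aboveI)
  have a0: "\<alpha> \<ge> 0" by (simp add: \<alpha>_def)
  have "0 \<le> qf M x - \<alpha> * qf N x" for x
  proof (cases "qf N x" "0::real" rule: linorder_cases)
    case less
    then have r: "qf M x / qf N x \<in> S" by (auto simp: S_def)
    then have Sne: "S \<noteq> {}" by auto
    have "qf M x / qf N x \<le> Sup S" by (rule cSup_upper[OF r bdd])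
    then have "qf M x / qf N x \<le> \<alpha>" using Sne by (simp add: \<alpha>_def)
    then have "\<alpha> * qf N x \<le> (qf M x / qf N x) * qf N x" using less
      by (intro mult_right_mono_neg) auto
    then show ?thesis using less by simp
  next
    case equal
    then show ?thesis using hyp[of x] by simp
  next
    case greater
    have r0: "0 \<le> qf M x / qf N x" using hyp[of x] greater by simp
    have "\<alpha> \<le> qf M x / qf N x"
    proof (cases "S = {}")
      case True then show ?thesis using r0 by (simp add: \<alpha>_def)
    next
      case False
      then have "Sup S \<le> qf M x / qf N x" by (intro cSup_least) (auto intro: ub[OF greater])
      then show ?thesis using False r0 by (simp add: \<alpha>_def)
    qed
    then show ?thesis using greater by (simp add: field_simps)
  qed
  then show ?thesis using a0 by blast
qed

lemma s_strict:
  fixes M N :: "real^'m^'m"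
  assumes sM: "transpose M = M" and sN: "transpose N = N"
    and x0: "qf N x0 > 0"
    and hyp: "\<And>x. x \<noteq> 0 \<Longrightarrow> 0 \<le> qf N x \<Longrightarrow> 0 < qf M x"
  shows "\<exists>\<alpha>\<ge>0. pd (M - \<alpha> *\<^sub>R N)"
proof -
  define A where "A = sphere (0::real^'m) 1 \<inter> {x. 0 \<le> qf N x}"
  have cl: "closed {x. 0 \<le> qf N x}"
    using closed_Collect_le[of "\<lambda>_. 0" "qf N"] cont_qf by auto
  have cA: "compact A" unfolding A_def by (intro compact_Int_closed compact_sphere cl)
  have x0n: "x0 \<noteq> 0" using x0 by (auto simp: qf_def)
  define u0 where "u0 = (1/norm x0) *\<^sub>R x0"
  have "u0 \<in> A" using x0 x0n by (simp add: A_def u0_def qf_scale)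
  then have Ane: "A \<noteq> {}" by auto
  obtain x1 where x1: "x1 \<in> A" and x1m: "\<And>y. y \<in> A \<Longrightarrow> qf M x1 \<le> qf M y"
    using continuous_attains_inf[OF cA Ane cont_qf] by blast
  have "x1 \<noteq> 0" using x1 by (auto simp: A_def)
  then have m0: "qf M x1 > 0" using hyp x1 by (auto simp: A_def)
  define \<delta> where "\<delta> = qf M x1 / 2"
  have dp: "\<delta> > 0" using m0 by (simp add: \<delta>_def)
  define M' where "M' = M + (-\<delta>) *\<^sub>R mat 1"
  have sM': "transpose M' = M'" unfolding M'_def by (simp add: transpose_lin sM)
  have qM': "qf M' x = qf M x - \<delta> * (x \<bullet> x)" for x unfolding M'_def by (simp add: qf_diff) (simp add: qf_def)
  have hyp': "0 \<le> qf M' x" if "0 \<le> qf N x" for x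
  proof (cases "x = 0")
    case True then show ?thesis by (simp add: qf_def M'_def)
  next
    case False
    define u where "u = (1/norm x) *\<^sub>R x"
    have xu: "x = norm x *\<^sub>R u" using False by (simp add: u_def)
    have "u \<in> A" using that False by (simp add: A_def u_def qf_scale)
    then have "qf M x1 \<le> qf M u" by (rule x1m)
    then have "(norm x)^2 * qf M x1 \<le> (norm x)^2 * qf M u" by (simp add: mult_left_mono)
    also have "\<dots> = qf M x" by (subst (2) xu) (simp add: qf_scale)
    finally have "(norm x)^2 * qf M x1 \<le> qf M x" .
    moreover have "qf M x1 / 2 * (x \<bullet> x) = ((norm x)^2 * qf M x1)/2"
      by (simp add: power2_norm_eq_inner)
    moreover have "0 \<le> (norm x)^2 * qf M x1" using m0 by simp
    ultimately show ?thesis unfolding qM' \<delta>_def by linarith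
  qed
  obtain \<alpha> where a0: "\<alpha> \<ge> 0" and ha: "\<And>x. 0 \<le> qf M' x - \<alpha> * qf N x"
    using s_nonstrict[OF sM' sN x0 hyp'] by blast
  have "pd (M - \<alpha> *\<^sub>R N)"
    unfolding pd_def
  proof (intro conjI allI impI)
    show "transpose (M - \<alpha> *\<^sub>R N) = M - \<alpha> *\<^sub>R N" by (simp add: transpose_lin sM sN)
  next
    fix x :: "real^'m" assume "x \<noteq> 0"
    then have "x \<bullet> x > 0" by simp
    then have dx: "\<delta> * (x \<bullet> x) > 0" using dp by simp
    have "qf (M - \<alpha> *\<^sub>R N) x = (qf M' x - \<alpha> * qf N x) + \<delta> * (x \<bullet> x)"
      by (simp add: qf_diff qM')
    then have "0 < qf (M - \<alpha> *\<^sub>R N) x" using ha[of x] dx by linarith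
    then show "0 < x \<bullet> ((M - \<alpha> *\<^sub>R N) *v x)" by (simp add: qf_def)
  qed
  then show ?thesis using a0 by blast
qed



lemma emb1_zero: "emb1 0 = 0" by (simp add: vec_eq_iff emb1_def split: sum.split)

lemma outer_mult: "((\<chi> b a. d$b * w$a) :: real^'k^'n) *v u = (w \<bullet> u) *\<^sub>R d"
  by (simp add: vec_eq_iff matrix_vector_mult_def inner_vec_def sum_distrib_left mult_ac)

lemma qf_nonneg_pd: "pd A \<Longrightarrow> 0 \<le> qf A u"
  unfolding pd_def qf_def by (cases "u = 0") (auto intro: less_imp_le)

lemma N22_neg:
  fixes N :: "real^('k::finite+'n::finite)^('k+'n)" and Zb :: "real^'k^'n" and d :: "real^'n"
  assumes sN: "transpose N = N" and bd: "bounded (SN N :: (real^'k^'n) set)"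
    and Zb: "pd (quadIZ N Zb)" and d: "d \<noteq> 0"
  shows "qf N (emb2 d :: real^('k+'n)) < 0"
proof (rule ccontr)
  assume "\<not> ?thesis"
  then have g: "0 \<le> qf N (emb2 d :: real^('k+'n))" by simp
  define e :: "real^('k+'n)" where "e = emb2 d"
  define v where "v = transpose (stackIZ Zb) *v (N *v e)"
  have vu: "(stackIZ Zb *v u) \<bullet> (N *v e) = u \<bullet> v" for u
    by (simp only: v_def dot_lmul_matrix[symmetric] vector_transpose_matrix)
  define w :: "real^'k" where "w = (if v = 0 then axis undefined 1 else v)"
  have w0: "w \<noteq> 0" by (simp add: w_def axis_eq_0_iff)
  have wv: "0 \<le> (w \<bullet> u) * (u \<bullet> v)" for u
    by (simp add: w_def inner_commute)
  define Zt where "Zt t = Zb + t *\<^sub>R ((\<chi> b a. d$b * w$a) :: real^'k^'n)" for t :: real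
  have Ztu: "Zt t *v u = Zb *v u + (t * (w \<bullet> u)) *\<^sub>R d" for t u
    by (simp add: Zt_def matrix_vector_mult_add_rdistrib scaleR_matrix_vector_assoc[symmetric] outer_mult)
  have SZt: "stackIZ (Zt t) *v u = stackIZ Zb *v u + (t * (w \<bullet> u)) *\<^sub>R e" for t u
    by (simp add: stack_mult Ztu emb2_lin e_def)
  have inS: "Zt t \<in> SN N" if t: "t \<ge> 0" for t
    unfolding SN_def psd_def
  proof (intro CollectI conjI allI)
    show "transpose (quadIZ N (Zt t)) = quadIZ N (Zt t)" by (rule quad_sym[OF sN])
  next
    fix u :: "real^'k"
    define s where "s = t * (w \<bullet> u)"
    have "u \<bullet> (quadIZ N (Zt t) *v u) = qf N (stackIZ Zb *v u + s *\<^sub>R e)"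
      using qf_quad[of N "Zt t" u] by (simp add: qf_def SZt s_def)
    also have "\<dots> = qf N (stackIZ Zb *v u) + 2 * (s * (u \<bullet> v)) + s^2 * qf N e"
      by (simp add: qf_add[OF sN] qf_scale matrix_vector_mult_scaleR vu)
    finally have eq: "u \<bullet> (quadIZ N (Zt t) *v u) = qf N (stackIZ Zb *v u) + 2 * (s * (u \<bullet> v)) + s^2 * qf N e" .
    have "0 \<le> qf N (stackIZ Zb *v u)" using qf_nonneg_pd[OF Zb, of u] by (simp add: qf_quad)
    moreover have "0 \<le> s * (u \<bullet> v)" unfolding s_def using wv[of u] t by (simp add: mult.assoc)
    moreover have "0 \<le> s^2 * qf N e" using g by (simp add: e_def)
    ultimately show "0 \<le> u \<bullet> (quadIZ N (Zt t) *v u)" unfolding eq by linarith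
  qed
  obtain B where B: "\<And>x. x \<in> SN N \<Longrightarrow> norm x \<le> B" using bd by (auto simp: bounded_iff)
  have "Zt 0 = Zb" by (simp add: Zt_def)
  then have B0: "0 \<le> B" using B[OF inS[of 0]] by (meson norm_ge_zero order_trans order_refl)
  obtain b0 where b0: "d $ b0 \<noteq> 0" using d by (auto simp: vec_eq_iff)
  obtain a1 where a1: "w $ a1 \<noteq> 0" using w0 by (auto simp: vec_eq_iff)
  define c where "c = d $ b0 * w $ a1"
  have c0: "c \<noteq> 0" using a1 b0 by (simp add: c_def)
  define z where "z = Zb $ b0 $ a1"
  define t where "t = (B + \<bar>z\<bar> + 1) / \<bar>c\<bar>"
  have t0: "t \<ge> 0" using B0 c0 by (simp add: t_def)
  have tc: "\<bar>t * c\<bar> = B + \<bar>z\<bar> + 1" using c0 B0 t0 by (simp add: t_def abs_mult)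
  have comp: "Zt t $ b0 $ a1 = z + t * c" by (simp add: Zt_def z_def c_def mult_ac)
  have "\<bar>Zt t $ b0 $ a1\<bar> \<le> norm (Zt t $ b0)" by (rule component_le_norm_cart)
  also have "\<dots> \<le> norm (Zt t)" using Finite_Cartesian_Product.norm_nth_le[where x="Zt t" and i=b0] by assumption
  also have "\<dots> \<le> B" by (rule B[OF inS[OF t0]])
  finally have "\<bar>z + t * c\<bar> \<le> B" by (simp add: comp)
  then show False using tc by linarith
qed

lemma completion:
  fixes N :: "real^('k::finite+'n::finite)^('k+'n)" and Zb :: "real^'k^'n"
  assumes sN: "transpose N = N"
    and neg: "\<And>d::real^'n. d \<noteq> 0 \<Longrightarrow> qf N (emb2 d :: real^('k+'n)) < 0"
    and Zb: "\<And>u. 0 \<le> qf N (stackIZ Zb *v u)"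
    and x: "0 \<le> qf N x"
  shows "\<exists>Z::real^'k^'n. Z \<in> SN N \<and> Z *v pk x = pn x"
proof -
  define L where "L = (\<lambda>d::real^'n. pn (N *v (emb2 d :: real^('k+'n))))"
  have linL: "linear L"
    by (rule linearI) (simp_all add: L_def emb2_lin matrix_vector_right_distrib pn_lin matrix_vector_mult_scaleR)
  have qL: "qf N (emb2 d :: real^('k+'n)) = d \<bullet> L d" for d
    by (simp add: qf_def emb2_inner L_def)
  have injL: "inj L"
  proof (rule injI)
    fix a b assume ab: "L a = L b"
    have "L (a - b) = 0" using ab linear_diff[OF linL, of a b] by simp
    then have "qf N (emb2 (a - b) :: real^('k+'n)) = 0" by (simp add: qL)
    then have "a - b = 0" using neg[of "a - b"] by (cases "a - b = 0") auto
    then show "a = b" by simp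
  qed
  have "surj L" by (rule eucl.linear_injective_imp_surjective[OF linL injL]) simp
  then obtain g where lg: "linear g" and Lg: "L \<circ> g = id"
    using linear_surjective_right_inverse[OF linL] by blast
  have Lg': "L (g y) = y" for y using Lg by (metis comp_apply id_apply)
  define c where "c u = g (- pn (N *v (emb1 u :: real^('k+'n))))" for u :: "real^'k"
  have cadd: "c (a + b) = c a + c b" for a b
    by (simp add: c_def emb1_lin matrix_vector_right_distrib pn_lin linear_add[OF lg] linear_diff[OF lg] linear_neg[OF lg])
  have cscale: "c (r *\<^sub>R a) = r *\<^sub>R c a" for r a
    by (simp add: c_def emb1_lin matrix_vector_mult_scaleR pn_lin linear_scale[OF lg] linear_neg[OF lg]
        flip: scaleR_minus_right)
  define Sc :: "real^'k \<Rightarrow> real^('k+'n)" where "Sc u = emb1 u + emb2 (c u)" for u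
  have Scadd: "Sc (a + b) = Sc a + Sc b" for a b by (simp add: Sc_def cadd emb1_lin emb2_lin)
  have Scscale: "Sc (r *\<^sub>R a) = r *\<^sub>R Sc a" for r a
    by (simp add: Sc_def cscale emb1_lin emb2_lin scaleR_add_right)
  have Lc: "L (c u) = - pn (N *v (emb1 u :: real^('k+'n)))" for u by (simp add: c_def Lg')
  have orth: "Sc u \<bullet> (N *v emb2 e) = 0" for u e
  proof -
    have "Sc u \<bullet> (N *v emb2 e) = emb2 e \<bullet> (N *v Sc u)" by (rule sym_bil[OF sN])
    also have "\<dots> = e \<bullet> pn (N *v Sc u)" by (rule emb2_inner)
    also have "\<dots> = e \<bullet> (pn (N *v emb1 u) + L (c u))"
      by (simp add: Sc_def L_def matrix_vector_right_distrib pn_lin)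
    also have "\<dots> = 0" by (simp add: Lc)
    finally show ?thesis .
  qed
  have split: "qf N (Sc u + emb2 e) = qf N (Sc u) + qf N (emb2 e)" for u e
    by (simp add: qf_add[OF sN] orth)
  have neg': "qf N (emb2 e :: real^('k+'n)) \<le> 0" for e
    using neg[of e] by (cases "e = 0") (auto simp: emb2_lin qf_def)
  define Q where "Q u = qf N (Sc u)" for u
  define Qb where "Qb a b = Sc a \<bullet> (N *v Sc b)" for a b
  have Qnn: "0 \<le> Q u" for u
  proof -
    have "stackIZ Zb *v u = Sc u + emb2 (Zb *v u - c u)"
      by (simp add: stack_mult Sc_def emb2_lin)
    then have "qf N (stackIZ Zb *v u) = Q u + qf N (emb2 (Zb *v u - c u))"
      by (simp add: split Q_def)
    then show ?thesis using Zb[of u] neg'[of "Zb *v u - c u"] by linarith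
  qed
  define \<xi> where "\<xi> = pk x"
  define \<eta> where "\<eta> = pn x"
  define v where "v = \<eta> - c \<xi>"
  have xdec: "x = Sc \<xi> + emb2 v"
    using decomp[of x] by (simp add: Sc_def v_def \<xi>_def \<eta>_def emb2_lin)
  have xv: "0 \<le> Q \<xi> + qf N (emb2 v)" using x by (simp add: xdec split Q_def)
  define f where "f \<zeta> = c \<zeta> + (Qb \<xi> \<zeta> / Q \<xi>) *\<^sub>R v" for \<zeta>
  have linf: "linear f"
    by (rule linearI)
      (simp_all add: f_def cadd cscale Qb_def Scadd Scscale matrix_vector_right_distrib
        matrix_vector_mult_scaleR inner_add_right add_divide_distrib scaleR_add_left algebra_simps)
  define Z where "Z = matrix f"
  have Zf: "Z *v \<zeta> = f \<zeta>" for \<zeta> by (simp add: Z_def matrix_works[OF linf[folded linear_matrix_vector_mul_eq]])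
  have QQ: "Qb \<xi> \<xi> = Q \<xi>" by (simp add: Qb_def Q_def qf_def)
  have Zxi: "Z *v \<xi> = \<eta>"
  proof (cases "Q \<xi> = 0")
    case True
    then have "0 \<le> qf N (emb2 v :: real^('k+'n))" using xv by simp
    then have "v = 0" using neg[of v] by fastforce
    then show ?thesis by (simp add: Zf f_def v_def)
  next
    case False
    then show ?thesis by (simp add: Zf f_def QQ v_def)
  qed
  have "Z \<in> SN N"
    unfolding SN_def psd_def
  proof (intro CollectI conjI allI)
    show "transpose (quadIZ N Z) = quadIZ N Z" by (rule quad_sym[OF sN])
  next
    fix \<zeta> :: "real^'k"
    define r where "r = Qb \<xi> \<zeta> / Q \<xi>"
    have "stackIZ Z *v \<zeta> = Sc \<zeta> + emb2 (r *\<^sub>R v)"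
      by (simp add: stack_mult Zf f_def Sc_def r_def emb2_lin)
    then have eq: "\<zeta> \<bullet> (quadIZ N Z *v \<zeta>) = Q \<zeta> + r^2 * qf N (emb2 v)"
      using qf_quad[of N Z \<zeta>] by (simp add: qf_def[symmetric] split Q_def) (simp add: emb2_lin qf_scale)
    show "0 \<le> \<zeta> \<bullet> (quadIZ N Z *v \<zeta>)"
    proof (cases "Q \<xi> = 0")
      case True
      then show ?thesis using eq Qnn[of \<zeta>] by (simp add: r_def)
    next
      case False
      then have Qp: "Q \<xi> > 0" using Qnn[of \<xi>] by simp
      define t where "t = - Qb \<xi> \<zeta> / Q \<xi>"
      have sb: "Sc \<zeta> \<bullet> (N *v Sc \<xi>) = Qb \<xi> \<zeta>"
        unfolding Qb_def by (rule sym_bil[OF sN])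
      have "Q (\<zeta> + t *\<^sub>R \<xi>) = Q \<zeta> + 2 * t * Qb \<xi> \<zeta> + t^2 * Q \<xi>"
        by (simp add: Q_def Scadd Scscale qf_add[OF sN] qf_scale matrix_vector_mult_scaleR sb)
      also have "\<dots> = Q \<zeta> - (Qb \<xi> \<zeta>)^2 / Q \<xi>"
        using Qp by (simp add: t_def field_simps power2_eq_square)
      finally have cs: "0 \<le> Q \<zeta> - (Qb \<xi> \<zeta>)^2 / Q \<xi>" using Qnn[of "\<zeta> + t *\<^sub>R \<xi>"] by simp
      have "r^2 * Q \<xi> = (Qb \<xi> \<zeta>)^2 / Q \<xi>" using Qp by (simp add: r_def power2_eq_square)
      moreover have "- (r^2 * Q \<xi>) \<le> r^2 * qf N (emb2 v)"
      proof -
        have "- Q \<xi> \<le> qf N (emb2 v)" using xv by linarith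
        then have "r^2 * (- Q \<xi>) \<le> r^2 * qf N (emb2 v)" by (rule mult_left_mono) simp
        then show ?thesis by simp
      qed
      ultimately show ?thesis using eq cs by linarith
    qed
  qed
  then show ?thesis using Zxi by (auto simp: \<xi>_def \<eta>_def)
qed


theorem theorem5:
  fixes M N :: "real^('k::finite + 'n::finite)^('k + 'n)"
  assumes "transpose M = M" and "transpose N = N"
    and "bounded (SN N :: (real^'k^'n) set)"
    and "\<exists>Zb :: real^'k^'n. pd (quadIZ N Zb)"
  shows "(\<forall>Z \<in> (SN N :: (real^'k^'n) set). pd (quadIZ M Z))
         \<longleftrightarrow> (\<exists>\<alpha>::real. \<alpha> \<ge> 0 \<and> pd (M - \<alpha> *\<^sub>R N))"
proof
  assume H: "\<forall>Z \<in> (SN N :: (real^'k^'n) set). pd (quadIZ M Z)"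
  obtain Zb :: "real^'k^'n" where Zb: "pd (quadIZ N Zb)" using assms(4) by blast
  have neg: "\<And>d::real^'n. d \<noteq> 0 \<Longrightarrow> qf N (emb2 d :: real^('k+'n)) < 0"
    by (rule N22_neg[OF assms(2) assms(3) Zb])
  define e0 :: "real^'k" where "e0 = axis undefined 1"
  have e0: "e0 \<noteq> 0" by (simp add: e0_def axis_eq_0_iff)
  have x0: "qf N (stackIZ Zb *v e0) > 0"
  proof -
    have "0 < qf (quadIZ N Zb) e0" using Zb e0 unfolding pd_def qf_def by blast
    then show ?thesis by (simp add: qf_quad)
  qed
  have Zbn: "\<And>u. 0 \<le> qf N (stackIZ Zb *v u)"
    using qf_nonneg_pd[OF Zb] by (simp add: qf_quad)
  have hyp: "0 < qf M x" if xn: "x \<noteq> 0" and xq: "0 \<le> qf N x" for x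
  proof -
    have pk0: "pk x \<noteq> 0"
    proof
      assume p: "pk x = 0"
      then have xe: "x = emb2 (pn x)" using decomp[of x] by (simp add: emb1_zero)
      then have "pn x \<noteq> 0" using xn by (metis emb2_lin(4))
      then have "qf N x < 0" using neg xe by metis
      then show False using xq by simp
    qed
    obtain Z :: "real^'k^'n" where Z: "Z \<in> SN N" and Zx: "Z *v pk x = pn x"
      using completion[OF assms(2) neg Zbn xq] by blast
    have sx: "stackIZ Z *v pk x = x" using decomp[of x] by (simp add: stack_mult Zx)
    have "0 < qf (quadIZ M Z) (pk x)"
      using H Z pk0 unfolding pd_def qf_def by blast
    then show ?thesis by (simp add: qf_quad sx)
  qed
  show "\<exists>\<alpha>::real. \<alpha> \<ge> 0 \<and> pd (M - \<alpha> *\<^sub>R N)"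
    using s_strict[OF assms(1) assms(2) x0 hyp] by blast
next
  assume "\<exists>\<alpha>::real. \<alpha> \<ge> 0 \<and> pd (M - \<alpha> *\<^sub>R N)"
  then obtain \<alpha> where a0: "\<alpha> \<ge> 0" and pa: "pd (M - \<alpha> *\<^sub>R N)" by blast
  show "\<forall>Z \<in> (SN N :: (real^'k^'n) set). pd (quadIZ M Z)"
  proof
    fix Z :: "real^'k^'n" assume Z: "Z \<in> SN N"
    show "pd (quadIZ M Z)"
      unfolding pd_def
    proof (intro conjI allI impI)
      show "transpose (quadIZ M Z) = quadIZ M Z" by (rule quad_sym[OF assms(1)])
    next
      fix u :: "real^'k" assume u: "u \<noteq> 0"
      have su: "stackIZ Z *v u \<noteq> 0" using u pk_stack[of Z u] by (metis pk_emb(3) emb2_lin(4))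
      have "0 < qf (M - \<alpha> *\<^sub>R N) (stackIZ Z *v u)"
        using pa su unfolding pd_def qf_def by blast
      then have g: "0 < qf M (stackIZ Z *v u) - \<alpha> * qf N (stackIZ Z *v u)" by (simp add: qf_diff)
      have "0 \<le> qf (quadIZ N Z) u" using Z unfolding SN_def psd_def qf_def by blast
      then have "0 \<le> qf N (stackIZ Z *v u)" by (simp add: qf_quad)
      then have "0 \<le> \<alpha> * qf N (stackIZ Z *v u)" using a0 by simp
      then have "0 < qf M (stackIZ Z *v u)" using g by linarith
      then have "0 < qf (quadIZ M Z) u" by (simp add: qf_quad)
      then show "0 < u \<bullet> (quadIZ M Z *v u)" by (simp add: qf_def)
    qed
  qed
qed

end
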